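(* Let $G=(V,E)$ be an infinite vertex-transitive simple graph and let $\alpha_0$ be the unique solution of $\alpha + \tfrac12\log(1+e^{-2\alpha}) = \log\mu_G$. For any $\alpha > \alpha_0$ there exists $c_1(\alpha)>0$ such that for any finite $U \subset V$ and all $A \subset U$, $$\frac{Z(U \setminus A)}{Z(U)} \geq c_1(\alpha)^{|A|}.$$ Moreover, $c_1(\alpha)$ can be chosen such that $\lim_{\alpha \to \infty} c_1(\alpha) = 1$.
   Context: For finite $U\subset V$, $Z(U)=\sum_{\pi}\exp(-\alpha\sum_{x\in U}\mathbb 1\{\pi(x)\neq x\})$, where the sum runs over bijections $\pi:U\to U$ with $\pi(x)=x$ or $\{x,\pi(x)\}\in E$ for all $x\in U$; $Z(\emptyset)=1$. A cycle in $G$ is a finite directed subgraph with vertices enumerated $x^1,\dots,x^n$ and edges $(x^i,x^{i+1})$, $1\le i\le n-1$, and $(x^n,x^1)$. With a fixed origin $0\in V$, $SAP_n$ is the set of cycles starting from $0$ with $n$ edges, and $\mu_G=\limsup_{n\to\infty}|SAP_n|^{1/n}$ is the cyclic connective constant. *)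

theory Defs
  imports "HOL-Analysis.Analysis"
begin

text \<open>Graphs: vertex set = UNIV of type 'v, edges given by a relation E.\<close>

definition simple_graph :: "('v \<Rightarrow> 'v \<Rightarrow> bool) \<Rightarrow> bool" where
  "simple_graph E \<longleftrightarrow> (\<forall>x y. E x y \<longrightarrow> E y x) \<and> (\<forall>x. \<not> E x x)"

definition graph_automorphism :: "('v \<Rightarrow> 'v \<Rightarrow> bool) \<Rightarrow> ('v \<Rightarrow> 'v) \<Rightarrow> bool" where
  "graph_automorphism E \<phi> \<longleftrightarrow> bij \<phi> \<and> (\<forall>a b. E a b \<longleftrightarrow> E (\<phi> a) (\<phi> b))"

definition vertex_transitive :: "('v \<Rightarrow> 'v \<Rightarrow> bool) \<Rightarrow> bool" where
  "vertex_transitive E \<longleftrightarrow> (\<forall>x y. \<exists>\<phi>. graph_automorphism E \<phi> \<and> \<phi> x = y)"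

definition locally_finite :: "('v \<Rightarrow> 'v \<Rightarrow> bool) \<Rightarrow> bool" where
  "locally_finite E \<longleftrightarrow> (\<forall>x. finite {y. E x y})"

definition adm_perms :: "('v \<Rightarrow> 'v \<Rightarrow> bool) \<Rightarrow> 'v set \<Rightarrow> ('v \<Rightarrow> 'v) set" where
  "adm_perms E U = {\<pi>. bij_betw \<pi> U U \<and> (\<forall>x. x \<notin> U \<longrightarrow> \<pi> x = x)
                        \<and> (\<forall>x\<in>U. \<pi> x = x \<or> E x (\<pi> x))}"

definition Z :: "('v \<Rightarrow> 'v \<Rightarrow> bool) \<Rightarrow> real \<Rightarrow> 'v set \<Rightarrow> real" where
  "Z E \<alpha> U = (\<Sum>\<pi>\<in>adm_perms E U. exp (- \<alpha> * real (card {x\<in>U. \<pi> x \<noteq> x})))"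

text \<open>Cycles starting from the origin o with n edges, represented by the enumeration
  [x^1,...,x^n] of their (distinct) vertices, x^1 = o.\<close>

definition SAP :: "('v \<Rightarrow> 'v \<Rightarrow> bool) \<Rightarrow> 'v \<Rightarrow> nat \<Rightarrow> 'v list set" where
  "SAP E v0 n = {xs. length xs = n \<and> n \<ge> 1 \<and> distinct xs \<and> xs ! 0 = v0
                  \<and> (\<forall>i. Suc i < n \<longrightarrow> E (xs ! i) (xs ! Suc i))
                  \<and> E (xs ! (n - 1)) (xs ! 0)}"

definition cyclic_connective_constant :: "('v \<Rightarrow> 'v \<Rightarrow> bool) \<Rightarrow> 'v \<Rightarrow> ereal" where
  "cyclic_connective_constant E v0 =
     limsup (\<lambda>n. ereal (root n (real (card (SAP E v0 n)))))"

end

theory Submission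
  imports Defs "HOL-Real_Asymp.Real_Asymp"
begin


lemma adm_perms_iff:
  "\<pi> \<in> adm_perms E W \<longleftrightarrow> \<pi> permutes W \<and> (\<forall>x\<in>W. \<pi> x = x \<or> E x (\<pi> x))"
  unfolding adm_perms_def
  by (auto intro: bij_imp_permutes permutes_imp_bij simp: permutes_not_in)

lemma finite_adm: "finite W \<Longrightarrow> finite (adm_perms E W)"
  by (rule finite_subset[OF _ finite_permutations[of W]]) (auto simp: adm_perms_iff)

lemma id_adm: "id \<in> adm_perms E W"
  by (simp add: adm_perms_iff permutes_id)

lemma Z_pos: "finite W \<Longrightarrow> Z E \<alpha> W > 0"
  unfolding Z_def
  by (rule sum_pos2[OF finite_adm id_adm]) auto

lemma Z_nonneg: "Z E \<alpha> W \<ge> 0"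
  unfolding Z_def by (simp add: sum_nonneg)

lemma adm_mono: "B \<subseteq> W \<Longrightarrow> adm_perms E B \<subseteq> adm_perms E W"
proof
  fix \<pi> assume "B \<subseteq> W" "\<pi> \<in> adm_perms E B"
  then have p: "\<pi> permutes B" and e: "\<forall>x\<in>B. \<pi> x = x \<or> E x (\<pi> x)" by (auto simp: adm_perms_iff)
  have "\<pi> permutes W" using permutes_subset[OF p \<open>B \<subseteq> W\<close>] .
  moreover have "\<forall>x\<in>W. \<pi> x = x \<or> E x (\<pi> x)" using e p by (metis permutes_not_in)
  ultimately show "\<pi> \<in> adm_perms E W" by (simp add: adm_perms_iff)
qed

lemma moved_sub: "\<pi> \<in> adm_perms E B \<Longrightarrow> B \<subseteq> W \<Longrightarrow> {x\<in>W. \<pi> x \<noteq> x} = {x\<in>B. \<pi> x \<noteq> x}"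
  by (auto simp: adm_perms_def)

lemma Z_mono: assumes "finite W" "B \<subseteq> W" shows "Z E \<alpha> B \<le> Z E \<alpha> W"
proof -
  have "Z E \<alpha> B = (\<Sum>\<pi>\<in>adm_perms E B. exp (- \<alpha> * real (card {x\<in>W. \<pi> x \<noteq> x})))"
    unfolding Z_def by (rule sum.cong) (auto simp: moved_sub[OF _ assms(2)])
  also have "\<dots> \<le> Z E \<alpha> W" unfolding Z_def
    by (rule sum_mono2[OF finite_adm[OF assms(1)] adm_mono[OF assms(2)]]) auto
  finally show ?thesis .
qed



lemma Z_pair:
  assumes fin: "finite C" and a: "a \<notin> C" and b: "b \<notin> C" and ab: "a \<noteq> b"
    and eab: "E a b" and eba: "E b a"
  shows "(1 + exp (-2*\<alpha>)) * Z E \<alpha> C \<le> Z E \<alpha> (insert a (insert b C))"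
proof -
  let ?D = "insert a (insert b C)"
  let ?w = "\<lambda>W \<pi>. exp (- \<alpha> * real (card {x\<in>W. \<pi> x \<noteq> x}))"
  let ?S1 = "adm_perms E C"
  let ?t = "\<lambda>\<pi>. Transposition.transpose a b \<circ> \<pi>"
  let ?S2 = "?t ` adm_perms E C"
  have finD: "finite ?D" using fin by simp
  have sub1: "?S1 \<subseteq> adm_perms E ?D" by (rule adm_mono) auto
  have sub2: "?S2 \<subseteq> adm_perms E ?D"
  proof
    fix \<sigma> assume "\<sigma> \<in> ?S2"
    then obtain \<pi> where \<sigma>: "\<sigma> = ?t \<pi>" and \<pi>: "\<pi> \<in> adm_perms E C" by auto
    then have p: "\<pi> permutes C" and e: "\<forall>x\<in>C. \<pi> x = x \<or> E x (\<pi> x)" by (auto simp: adm_perms_iff)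
    have pD: "\<pi> permutes ?D" by (rule permutes_subset[OF p]) auto
    have "Transposition.transpose a b permutes ?D" by (rule permutes_swap_id) auto
    then have "\<sigma> permutes ?D" using permutes_compose[OF pD] \<sigma> by simp
    moreover have "\<forall>x\<in>?D. \<sigma> x = x \<or> E x (\<sigma> x)"
    proof
      fix x assume "x \<in> ?D"
      show "\<sigma> x = x \<or> E x (\<sigma> x)"
      proof (cases "x \<in> C")
        case True
        then have "\<pi> x \<in> C" using p by (simp add: permutes_in_image)
        then have "\<sigma> x = \<pi> x" using \<sigma> a b by (auto simp: Transposition.transpose_def)
        then show ?thesis using e True by simp
      next
        case False
        then have "\<pi> x = x" using p by (simp add: permutes_not_in)
        then show ?thesis using \<sigma> False \<open>x \<in> ?D\<close> eab eba by (auto simp: Transposition.transpose_def)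
      qed
    qed
    ultimately show "\<sigma> \<in> adm_perms E ?D" by (simp add: adm_perms_iff)
  qed
  have disj: "?S1 \<inter> ?S2 = {}"
  proof -
    { fix \<pi> \<pi>' assume "\<pi> \<in> ?S1" "\<pi>' \<in> ?S1" "\<pi> = ?t \<pi>'"
      have "\<pi> a = a" using \<open>\<pi> \<in> ?S1\<close> a by (simp add: adm_perms_def)
      moreover have "\<pi>' a = a" using \<open>\<pi>' \<in> ?S1\<close> a by (simp add: adm_perms_def)
      then have "?t \<pi>' a = b" by simp
      ultimately have False using \<open>\<pi> = ?t \<pi>'\<close> ab by simp }
    then show ?thesis by blast
  qed
  have injt: "inj_on ?t ?S1"
  proof (rule inj_onI)
    fix p q assume "?t p = ?t q"
    show "p = q"
    proof
      fix z
      have "Transposition.transpose a b (Transposition.transpose a b (p z)) = Transposition.transpose a b (Transposition.transpose a b (q z))"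
        using \<open>?t p = ?t q\<close> by (metis comp_apply)
      then show "p z = q z" by simp
    qed
  qed
  have w2: "?w ?D (?t \<pi>) = exp (-2*\<alpha>) * ?w C \<pi>" if "\<pi> \<in> ?S1" for \<pi>
  proof -
    have p: "\<pi> permutes C" using that by (simp add: adm_perms_iff)
    have "{x\<in>?D. ?t \<pi> x \<noteq> x} = insert a (insert b {x\<in>C. \<pi> x \<noteq> x})"
    proof (rule set_eqI)
      fix x
      show "x \<in> {x\<in>?D. ?t \<pi> x \<noteq> x} \<longleftrightarrow> x \<in> insert a (insert b {x\<in>C. \<pi> x \<noteq> x})"
      proof (cases "x \<in> C")
        case True
        then have "\<pi> x \<in> C" using p by (simp add: permutes_in_image)
        then show ?thesis using True a b by (auto simp: Transposition.transpose_def)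
      next
        case False
        then have "\<pi> x = x" using p by (simp add: permutes_not_in)
        then show ?thesis using False ab by (auto simp: Transposition.transpose_def)
      qed
    qed
    moreover have "card (insert a (insert b {x\<in>C. \<pi> x \<noteq> x})) = card {x\<in>C. \<pi> x \<noteq> x} + 2"
      using fin a b ab by simp
    ultimately show ?thesis by (simp add: algebra_simps exp_add[symmetric])
  qed
  have w1: "?w ?D \<pi> = ?w C \<pi>" if "\<pi> \<in> ?S1" for \<pi>
  proof -
    have "C \<subseteq> ?D" by auto
    from moved_sub[OF that this] show ?thesis by simp
  qed
  have "(1 + exp (-2*\<alpha>)) * Z E \<alpha> C = sum (?w ?D) ?S1 + sum (?w ?D) ?S2"
  proof -
    have "sum (?w ?D) ?S2 = sum (?w ?D \<circ> ?t) ?S1" by (rule sum.reindex[OF injt])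
    also have "\<dots> = exp (-2*\<alpha>) * Z E \<alpha> C" unfolding Z_def sum_distrib_left
    proof (rule sum.cong[OF refl])
      fix \<pi> assume h: "\<pi> \<in> ?S1"
      show "(?w ?D \<circ> ?t) \<pi> = exp (-2*\<alpha>) * ?w C \<pi>"
        using w2[OF h] by (simp only: comp_apply)
    qed
    finally have s2: "sum (?w ?D) ?S2 = exp (-2*\<alpha>) * Z E \<alpha> C" .
    have s1: "sum (?w ?D) ?S1 = Z E \<alpha> C" unfolding Z_def
    proof (rule sum.cong[OF refl])
      fix \<pi> assume h: "\<pi> \<in> ?S1"
      show "?w ?D \<pi> = ?w C \<pi>" by (rule w1[OF h])
    qed
    show ?thesis unfolding s1 s2 by (simp add: algebra_simps)
  qed
  also have "\<dots> = sum (?w ?D) (?S1 \<union> ?S2)"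
    by (rule sum.union_disjoint[symmetric]) (use fin finite_adm disj in auto)
  also have "\<dots> \<le> Z E \<alpha> ?D" unfolding Z_def
    by (rule sum_mono2[OF finite_adm[OF finD]]) (use sub1 sub2 in auto)
  finally show ?thesis .
qed

lemma Z_path:
  assumes fin: "finite B" and sg: "simple_graph E"
  shows "distinct ys \<Longrightarrow> set ys \<inter> B = {} \<Longrightarrow> (\<forall>i. Suc i < length ys \<longrightarrow> E (ys!i) (ys!Suc i))
     \<Longrightarrow> (1 + exp (-2*\<alpha>)) ^ (length ys div 2) * Z E \<alpha> B \<le> Z E \<alpha> (B \<union> set ys)"
proof (induction ys rule: induct_list012)
  case 1 then show ?case by simp
next
  case (2 x) then show ?case using Z_mono[of "B \<union> {x}" B E \<alpha>] fin by auto
next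
  case (3 x y zs)
  have e: "\<forall>i. Suc i < length zs \<longrightarrow> E (zs!i) (zs!Suc i)"
  proof (intro allI impI)
    fix i assume "Suc i < length zs"
    then show "E (zs!i) (zs!Suc i)" using 3(5)[rule_format, of "Suc (Suc i)"] by simp
  qed
  have IH: "(1 + exp (-2*\<alpha>)) ^ (length zs div 2) * Z E \<alpha> B \<le> Z E \<alpha> (B \<union> set zs)"
    using 3 e by auto
  have exy: "E x y" using 3(5)[rule_format, of 0] by simp
  then have eyx: "E y x" using sg by (simp add: simple_graph_def)
  have "(1 + exp (-2*\<alpha>)) ^ (length (x#y#zs) div 2) * Z E \<alpha> B
      = (1 + exp (-2*\<alpha>)) * ((1 + exp (-2*\<alpha>)) ^ (length zs div 2) * Z E \<alpha> B)" by simp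
  also have "\<dots> \<le> (1 + exp (-2*\<alpha>)) * Z E \<alpha> (B \<union> set zs)"
    by (rule mult_left_mono[OF IH]) (simp add: add_nonneg_nonneg)
  also have "\<dots> \<le> Z E \<alpha> (insert x (insert y (B \<union> set zs)))"
    by (rule Z_pair) (use 3 fin exy eyx in auto)
  finally show ?case by simp
qed



definition cl :: "('v \<Rightarrow> 'v) \<Rightarrow> 'v \<Rightarrow> nat" where
  "cl \<pi> x = (LEAST k. 0 < k \<and> (\<pi>^^k) x = x)"

definition cyc :: "('v \<Rightarrow> 'v) \<Rightarrow> 'v \<Rightarrow> 'v list" where
  "cyc \<pi> x = map (\<lambda>i. (\<pi>^^i) x) [0..<cl \<pi> x]"

lemma funpow_cancel:
  assumes "inj \<pi>" "i \<le> j" "(\<pi>^^i) x = (\<pi>^^j) x"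
  shows "(\<pi>^^(j-i)) x = x"
proof -
  have "(\<pi>^^j) x = (\<pi>^^i) ((\<pi>^^(j-i)) x)"
    using assms(2) by (metis funpow_add le_add_diff_inverse comp_apply)
  then have "(\<pi>^^i) ((\<pi>^^(j-i)) x) = (\<pi>^^i) x" using assms(3) by simp
  moreover have "inj (\<pi>^^i)" using assms(1) by simp
  ultimately show ?thesis by (meson injD)
qed

lemma cl_exists:
  assumes p: "\<pi> permutes W" and fin: "finite W" and x: "x \<in> W"
  shows "\<exists>k. 0 < k \<and> (\<pi>^^k) x = x"
proof -
  let ?f = "\<lambda>i. (\<pi>^^i) x"
  have "?f ` {0..card W} \<subseteq> W" using permutes_in_funpow_image[OF p x] by auto
  moreover have "\<not> card {0..card W} \<le> card W" by simp
  ultimately have "\<not> inj_on ?f {0..card W}" using card_inj_on_le[OF _ _ fin] by blast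
  then obtain i j where ij: "i \<in> {0..card W}" "j \<in> {0..card W}" "i \<noteq> j" "?f i = ?f j"
    unfolding inj_on_def by blast
  have inj: "inj \<pi>" using p by (rule permutes_inj)
  show ?thesis
  proof (cases "i < j")
    case True
    then show ?thesis using funpow_cancel[OF inj, of i j x] ij by (intro exI[of _ "j-i"]) auto
  next
    case False
    then show ?thesis using funpow_cancel[OF inj, of j i x] ij by (intro exI[of _ "i-j"]) auto
  qed
qed

lemma cl_props:
  assumes p: "\<pi> permutes W" and fin: "finite W" and x: "x \<in> W"
  shows "0 < cl \<pi> x" "(\<pi>^^cl \<pi> x) x = x" "\<And>k. 0 < k \<Longrightarrow> k < cl \<pi> x \<Longrightarrow> (\<pi>^^k) x \<noteq> x"
proof -
  obtain k where k: "0 < k \<and> (\<pi>^^k) x = x" using cl_exists[OF assms] by blast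
  show "0 < cl \<pi> x" "(\<pi>^^cl \<pi> x) x = x" using LeastI[of "\<lambda>k. 0 < k \<and> (\<pi>^^k) x = x", OF k]
    by (auto simp: cl_def)
  show "\<And>k. 0 < k \<Longrightarrow> k < cl \<pi> x \<Longrightarrow> (\<pi>^^k) x \<noteq> x"
    using not_less_Least unfolding cl_def by blast
qed

lemma cyc_distinct_aux:
  assumes p: "\<pi> permutes W" and fin: "finite W" and x: "x \<in> W"
    and "i < j" "j < cl \<pi> x"
  shows "(\<pi>^^i) x \<noteq> (\<pi>^^j) x"
proof
  assume "(\<pi>^^i) x = (\<pi>^^j) x"
  then have "(\<pi>^^(j-i)) x = x" using funpow_cancel[OF permutes_inj[OF p]] assms(4) by simp
  moreover have "0 < j - i" "j - i < cl \<pi> x" using assms by auto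
  ultimately show False using cl_props(3)[OF p fin x] by blast
qed

lemma cyc_props:
  assumes p: "\<pi> permutes W" and fin: "finite W" and x: "x \<in> W"
  shows "length (cyc \<pi> x) = cl \<pi> x"
    and "\<And>i. i < cl \<pi> x \<Longrightarrow> cyc \<pi> x ! i = (\<pi>^^i) x"
    and "distinct (cyc \<pi> x)"
    and "\<And>i. i < cl \<pi> x \<Longrightarrow> \<pi> (cyc \<pi> x ! i) = (if Suc i < cl \<pi> x then cyc \<pi> x ! Suc i else x)"
    and "set (cyc \<pi> x) \<subseteq> W"
    and "cyc \<pi> x ! 0 = x"
proof -
  show l: "length (cyc \<pi> x) = cl \<pi> x" by (simp add: cyc_def)
  show n: "\<And>i. i < cl \<pi> x \<Longrightarrow> cyc \<pi> x ! i = (\<pi>^^i) x" by (simp add: cyc_def)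
  show "distinct (cyc \<pi> x)"
  proof (subst distinct_conv_nth, intro allI impI)
    fix i j assume "i < length (cyc \<pi> x)" "j < length (cyc \<pi> x)" "i \<noteq> j"
    then show "cyc \<pi> x ! i \<noteq> cyc \<pi> x ! j"
      using cyc_distinct_aux[OF p fin x, of i j] cyc_distinct_aux[OF p fin x, of j i] l n
      by (cases "i < j") auto
  qed
  show "\<And>i. i < cl \<pi> x \<Longrightarrow> \<pi> (cyc \<pi> x ! i) = (if Suc i < cl \<pi> x then cyc \<pi> x ! Suc i else x)"
  proof -
    fix i assume i: "i < cl \<pi> x"
    have "\<pi> (cyc \<pi> x ! i) = (\<pi>^^Suc i) x" using n[OF i] by simp
    then show "\<pi> (cyc \<pi> x ! i) = (if Suc i < cl \<pi> x then cyc \<pi> x ! Suc i else x)"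
      using n[of "Suc i"] cl_props(2)[OF p fin x] i by (auto simp: not_less dest: le_antisym)
  qed
  show "set (cyc \<pi> x) \<subseteq> W" using permutes_in_funpow_image[OF p x] by (auto simp: cyc_def)
  show "cyc \<pi> x ! 0 = x" using n[of 0] cl_props(1)[OF p fin x] by simp
qed



definition rest :: "('v \<Rightarrow> 'v) \<Rightarrow> 'v \<Rightarrow> ('v \<Rightarrow> 'v)" where
  "rest \<pi> x = (\<lambda>y. if y \<in> set (cyc \<pi> x) then y else \<pi> y)"

lemma decomp:
  assumes adm: "\<pi> \<in> adm_perms E W" and fin: "finite W" and x: "x \<in> W" and mv: "\<pi> x \<noteq> x"
  shows "cyc \<pi> x \<in> SAP E x (cl \<pi> x)" "2 \<le> cl \<pi> x" "cl \<pi> x \<le> card W" "set (cyc \<pi> x) \<subseteq> W"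
    "rest \<pi> x \<in> adm_perms E (W - set (cyc \<pi> x))"
    "card {y\<in>W. \<pi> y \<noteq> y} = cl \<pi> x + card {y\<in>W - set (cyc \<pi> x). rest \<pi> x y \<noteq> y}"
proof -
  have p: "\<pi> permutes W" and e: "\<forall>y\<in>W. \<pi> y = y \<or> E y (\<pi> y)" using adm by (auto simp: adm_perms_iff)
  let ?n = "cl \<pi> x" let ?xs = "cyc \<pi> x"
  note cp = cyc_props[OF p fin x]
  have n0: "0 < ?n" using cl_props[OF p fin x] by simp
  show n2: "2 \<le> ?n"
  proof (rule ccontr)
    assume "\<not> 2 \<le> ?n" then have "?n = 1" using n0 by simp
    then show False using cl_props(2)[OF p fin x] mv by simp
  qed
  show sub: "set ?xs \<subseteq> W" by (rule cp(5))
  have mvi: "\<pi> (?xs ! i) \<noteq> ?xs ! i" if i: "i < ?n" for i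
  proof (cases "Suc i < ?n")
    case True
    then show ?thesis using cp(4)[OF i] cp(3) cp(1) i by (simp add: nth_eq_iff_index_eq)
  next
    case False
    then have "\<pi> (?xs ! i) = ?xs ! 0" using cp(4)[OF i] cp(6) by simp
    moreover have "i \<noteq> 0" using False n2 by simp
    ultimately show ?thesis using cp(3) cp(1) i n0 by (simp add: nth_eq_iff_index_eq)
  qed
  have Ei: "E (?xs ! i) (\<pi> (?xs ! i))" if i: "i < ?n" for i
  proof -
    have "?xs ! i \<in> W" using sub cp(1) i nth_mem by (metis subsetD)
    then show ?thesis using e mvi[OF i] by blast
  qed
  show "?xs \<in> SAP E x ?n"
    unfolding SAP_def
  proof (intro CollectI conjI allI impI)
    show "length ?xs = ?n" by (rule cp(1))
    show "1 \<le> ?n" using n0 by simp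
    show "distinct ?xs" by (rule cp(3))
    show "?xs ! 0 = x" by (rule cp(6))
    fix i assume i: "Suc i < ?n"
    show "E (?xs ! i) (?xs ! Suc i)" using Ei[of i] cp(4)[of i] i by simp
  next
    have "\<pi> (?xs ! (?n - 1)) = ?xs ! 0" using cp(4)[of "?n - 1"] n0 cp(6) by simp
    then show "E (?xs ! (?n - 1)) (?xs ! 0)" using Ei[of "?n - 1"] n0 by simp
  qed
  show "?n \<le> card W" using card_mono[OF fin sub] distinct_card[OF cp(3)] cp(1) by simp
  have img: "\<pi> ` set ?xs = set ?xs"
  proof
    show "\<pi> ` set ?xs \<subseteq> set ?xs"
    proof
      fix z assume "z \<in> \<pi> ` set ?xs"
      then obtain i where i: "i < ?n" "z = \<pi> (?xs ! i)" using cp(1) by (auto simp: in_set_conv_nth)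
      show "z \<in> set ?xs"
      proof (cases "Suc i < ?n")
        case True then show ?thesis using cp(4)[OF i(1)] cp(1) i(2) by (metis nth_mem)
      next
        case False then show ?thesis using cp(4)[OF i(1)] cp(1) cp(6) i(2) n0 by (metis nth_mem)
      qed
    qed
    then show "set ?xs \<subseteq> \<pi> ` set ?xs"
      using permutes_inj[OF p] by (metis card_image card_subset_eq finite_set inj_on_subset subset_UNIV)
  qed
  have inj: "inj \<pi>" using p by (rule permutes_inj)
  have imgW: "\<pi> ` (W - set ?xs) = W - set ?xs"
    using image_set_diff[OF inj] permutes_image[OF p] img by simp
  show "rest \<pi> x \<in> adm_perms E (W - set ?xs)"
    unfolding adm_perms_def
  proof (intro CollectI conjI allI impI ballI)
    have "bij_betw \<pi> (W - set ?xs) (W - set ?xs)"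
      using imgW inj by (simp add: bij_betw_def inj_on_subset[OF inj])
    then show "bij_betw (rest \<pi> x) (W - set ?xs) (W - set ?xs)"
      by (rule bij_betw_cong[THEN iffD1, rotated]) (auto simp: rest_def)
  next
    fix y assume "y \<notin> W - set ?xs"
    then show "rest \<pi> x y = y" using p by (auto simp: rest_def permutes_not_in)
  next
    fix y assume "y \<in> W - set ?xs"
    then show "rest \<pi> x y = y \<or> E y (rest \<pi> x y)" using e by (auto simp: rest_def)
  qed
  have split: "{y\<in>W. \<pi> y \<noteq> y} = set ?xs \<union> {y\<in>W - set ?xs. rest \<pi> x y \<noteq> y}"
  proof -
    have "set ?xs \<subseteq> {y\<in>W. \<pi> y \<noteq> y}" using sub mvi cp(1) by (auto simp: in_set_conv_nth)
    then show ?thesis by (auto simp: rest_def)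
  qed
  show "card {y\<in>W. \<pi> y \<noteq> y} = ?n + card {y\<in>W - set ?xs. rest \<pi> x y \<noteq> y}"
    unfolding split using fin distinct_card[OF cp(3)] cp(1)
    by (subst card_Un_disjoint) auto
qed

lemma decomp_inj:
  assumes a1: "\<pi>1 \<in> adm_perms E W" and a2: "\<pi>2 \<in> adm_perms E W" and fin: "finite W" and x: "x \<in> W"
    and eq1: "cyc \<pi>1 x = cyc \<pi>2 x" and eq2: "rest \<pi>1 x = rest \<pi>2 x"
  shows "\<pi>1 = \<pi>2"
proof
  fix y
  have p1: "\<pi>1 permutes W" and p2: "\<pi>2 permutes W" using a1 a2 by (auto simp: adm_perms_iff)
  note c1 = cyc_props[OF p1 fin x] and c2 = cyc_props[OF p2 fin x]
  have len: "cl \<pi>1 x = cl \<pi>2 x" using c1(1) c2(1) eq1 by simp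
  show "\<pi>1 y = \<pi>2 y"
  proof (cases "y \<in> set (cyc \<pi>1 x)")
    case True
    then obtain i where i: "i < cl \<pi>1 x" "y = cyc \<pi>1 x ! i" using c1(1) by (auto simp: in_set_conv_nth)
    show ?thesis using c1(4)[OF i(1)] c2(4)[of i] i len eq1 by simp
  next
    case False
    then have "y \<notin> set (cyc \<pi>2 x)" using eq1 by simp
    then show ?thesis using False fun_cong[OF eq2, of y] by (simp add: rest_def)
  qed
qed



lemma Z_step:
  assumes fin: "finite W" and x: "x \<in> W"
  shows "Z E \<alpha> W \<le> Z E \<alpha> (W - {x}) +
    (\<Sum>n\<in>{2..card W}. \<Sum>xs\<in>{xs\<in>SAP E x n. set xs \<subseteq> W}. exp (-\<alpha> * real n) * Z E \<alpha> (W - set xs))"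
proof -
  let ?w = "\<lambda>\<pi>. exp (- \<alpha> * real (card {y\<in>W. \<pi> y \<noteq> y}))"
  let ?S0 = "{\<pi>\<in>adm_perms E W. \<pi> x = x}"
  let ?M = "{\<pi>\<in>adm_perms E W. \<pi> x \<noteq> x}"
  let ?T = "\<lambda>n. {xs\<in>SAP E x n. set xs \<subseteq> W}"
  let ?I = "Sigma {2..card W} (\<lambda>n. Sigma (?T n) (\<lambda>xs. adm_perms E (W - set xs)))"
  let ?h = "\<lambda>(n::nat, xs::'a list, \<rho>). exp (-\<alpha> * real n) * exp (- \<alpha> * real (card {y\<in>W - set xs. \<rho> y \<noteq> y}))"
  let ?g = "\<lambda>\<pi>. (cl \<pi> x, cyc \<pi> x, rest \<pi> x)"
  have finA: "finite (adm_perms E W)" using finite_adm[OF fin] .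
  have "Z E \<alpha> W = sum ?w (?S0 \<union> ?M)" unfolding Z_def by (rule sum.cong) auto
  also have "\<dots> = sum ?w ?S0 + sum ?w ?M"
    by (rule sum.union_disjoint) (use finA in auto)
  finally have Zs: "Z E \<alpha> W = sum ?w ?S0 + sum ?w ?M" .
  have S0: "?S0 = adm_perms E (W - {x})"
  proof
    show "?S0 \<subseteq> adm_perms E (W - {x})"
    proof
      fix \<pi> assume "\<pi> \<in> ?S0"
      then have p: "\<pi> permutes W" "\<forall>y\<in>W. \<pi> y = y \<or> E y (\<pi> y)" "\<pi> x = x" by (auto simp: adm_perms_iff)
      have "bij_betw \<pi> (W - {x}) (W - {x})"
        using permutes_imp_bij[OF p(1)] p(3) by (metis bij_betw_DiffI bij_betw_singletonI empty_subsetI insert_subset x)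
      moreover have "\<forall>y. y \<notin> W - {x} \<longrightarrow> \<pi> y = y" using p by (auto simp: permutes_not_in)
      ultimately have "\<pi> permutes (W - {x})" by (intro bij_imp_permutes) auto
      then show "\<pi> \<in> adm_perms E (W - {x})" using p by (auto simp: adm_perms_iff)
    qed
    show "adm_perms E (W - {x}) \<subseteq> ?S0"
      using adm_mono[of "W - {x}" W E] by (auto simp: adm_perms_def)
  qed
  have s0: "sum ?w ?S0 = Z E \<alpha> (W - {x})"
    unfolding S0 Z_def
  proof (rule sum.cong[OF refl])
    fix \<pi> assume "\<pi> \<in> adm_perms E (W - {x})"
    then show "?w \<pi> = exp (- \<alpha> * real (card {y\<in>W - {x}. \<pi> y \<noteq> y}))"
      using moved_sub[of \<pi> E "W - {x}" W] by auto
  qed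
  have injg: "inj_on ?g ?M"
    by (rule inj_onI) (use decomp_inj[OF _ _ fin x] in auto)
  have gI: "?g ` ?M \<subseteq> ?I"
  proof
    fix z assume "z \<in> ?g ` ?M"
    then obtain \<pi> where \<pi>: "\<pi> \<in> adm_perms E W" "\<pi> x \<noteq> x" "z = ?g \<pi>" by auto
    note d = decomp[OF \<pi>(1) fin x \<pi>(2)]
    show "z \<in> ?I" using d \<pi>(3) by auto
  qed
  have wh: "?w \<pi> = ?h (?g \<pi>)" if "\<pi> \<in> ?M" for \<pi>
  proof -
    have "\<pi> \<in> adm_perms E W" "\<pi> x \<noteq> x" using that by auto
    note d = decomp[OF this(1) fin x this(2)]
    show ?thesis using d(6) by (simp add: algebra_simps exp_add[symmetric])
  qed
  have finT: "finite (?T n)" for n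
    by (rule finite_subset[OF _ finite_lists_length_le[OF fin, of n]]) (auto simp: SAP_def)
  have finI: "finite ?I" using finT fin by (intro finite_SigmaI finite_adm) auto
  have nonneg: "\<forall>z\<in>?I. 0 \<le> ?h z" by auto
  have "sum ?w ?M = sum (?h \<circ> ?g) ?M"
  proof (rule sum.cong[OF refl])
    fix \<pi> assume h: "\<pi> \<in> ?M"
    show "?w \<pi> = (?h \<circ> ?g) \<pi>" using wh[OF h] by (simp only: comp_apply)
  qed
  also have "\<dots> = sum ?h (?g ` ?M)" by (rule sum.reindex[symmetric, OF injg])
  also have "\<dots> \<le> sum ?h ?I" by (rule sum_mono2[OF finI gI]) auto
  also have "\<dots> = (\<Sum>n\<in>{2..card W}. \<Sum>p\<in>Sigma (?T n) (\<lambda>xs. adm_perms E (W - set xs)). ?h (n, p))"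
    by (subst sum.Sigma) (use finT fin in \<open>auto intro: finite_adm finite_SigmaI simp: case_prod_beta\<close>)
  also have "\<dots> = (\<Sum>n\<in>{2..card W}. \<Sum>xs\<in>?T n. exp (-\<alpha> * real n) * Z E \<alpha> (W - set xs))"
  proof (rule sum.cong[OF refl])
    fix n
    have "(\<Sum>p\<in>Sigma (?T n) (\<lambda>xs. adm_perms E (W - set xs)). ?h (n, p))
       = (\<Sum>xs\<in>?T n. \<Sum>\<rho>\<in>adm_perms E (W - set xs). ?h (n, xs, \<rho>))"
      by (subst sum.Sigma) (use finT fin in \<open>auto intro: finite_adm finite_SigmaI simp: case_prod_beta\<close>)
    also have "\<dots> = (\<Sum>xs\<in>?T n. exp (-\<alpha> * real n) * Z E \<alpha> (W - set xs))"
      by (rule sum.cong[OF refl]) (simp add: Z_def sum_distrib_left)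
    finally show "(\<Sum>p\<in>Sigma (?T n) (\<lambda>xs. adm_perms E (W - set xs)). ?h (n, p))
       = (\<Sum>xs\<in>?T n. exp (-\<alpha> * real n) * Z E \<alpha> (W - set xs))" .
  qed
  finally show ?thesis using Zs s0 by simp
qed



lemma Z_cycle_bound:
  assumes fin: "finite W" and sg: "simple_graph E" and xs: "xs \<in> SAP E x n" and sub: "set xs \<subseteq> W"
  shows "(1 + exp (-2*\<alpha>)) ^ ((n - 1) div 2) * Z E \<alpha> (W - set xs) \<le> Z E \<alpha> (W - {x})"
proof -
  from xs have l: "length xs = n" "n \<ge> 1" "distinct xs" "xs ! 0 = x"
    and pth: "\<forall>i. Suc i < n \<longrightarrow> E (xs ! i) (xs ! Suc i)" by (auto simp: SAP_def)
  have xs_eq: "xs = x # tl xs" using l by (cases xs) auto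
  let ?ys = "tl xs"
  have d: "distinct ?ys" using l(3) by (simp add: distinct_tl)
  have xn: "x \<notin> set ?ys" using l(3) xs_eq by (metis distinct.simps(2))
  have sx: "set xs = insert x (set ?ys)" by (subst xs_eq) simp
  have B: "(W - set xs) \<union> set ?ys = W - {x}" using sub xn unfolding sx by auto
  have ly: "length ?ys = n - 1" using l by simp
  have py: "\<forall>i. Suc i < length ?ys \<longrightarrow> E (?ys ! i) (?ys ! Suc i)"
  proof (intro allI impI)
    fix i assume "Suc i < length ?ys"
    then have "Suc (Suc i) < n" using ly by simp
    have tj: "?ys ! j = xs ! Suc j" for j by (subst (2) xs_eq) simp
    show "E (?ys ! i) (?ys ! Suc i)" using pth[rule_format, of "Suc i"] \<open>Suc (Suc i) < n\<close> by (simp add: tj)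
  qed
  have "(1 + exp (-2*\<alpha>)) ^ (length ?ys div 2) * Z E \<alpha> (W - set xs) \<le> Z E \<alpha> ((W - set xs) \<union> set ?ys)"
    by (rule Z_path) (use fin sg d sx py in auto)
  then show ?thesis using B ly by simp
qed

lemma Z_step2:
  assumes fin: "finite W" and x: "x \<in> W" and sg: "simple_graph E"
    and cardb: "\<And>n. card {xs\<in>SAP E x n. set xs \<subseteq> W} \<le> a n"
  shows "Z E \<alpha> W \<le> Z E \<alpha> (W - {x}) *
    (1 + (\<Sum>n\<in>{2..card W}. real (a n) * exp (-\<alpha> * real n) / (1 + exp (-2*\<alpha>)) ^ ((n - 1) div 2)))"
proof -
  let ?s = "1 + exp (-2*\<alpha>)"
  let ?Z' = "Z E \<alpha> (W - {x})"
  have spos: "?s > 0" by (simp add: add_pos_pos)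
  have Z'nn: "?Z' \<ge> 0" by (rule Z_nonneg)
  have "Z E \<alpha> W \<le> ?Z' + (\<Sum>n\<in>{2..card W}. \<Sum>xs\<in>{xs\<in>SAP E x n. set xs \<subseteq> W}. exp (-\<alpha> * real n) * Z E \<alpha> (W - set xs))"
    by (rule Z_step[OF fin x])
  also have "\<dots> \<le> ?Z' + (\<Sum>n\<in>{2..card W}. \<Sum>xs\<in>{xs\<in>SAP E x n. set xs \<subseteq> W}. exp (-\<alpha> * real n) * (?Z' / ?s ^ ((n - 1) div 2)))"
  proof (intro add_left_mono sum_mono mult_left_mono)
    fix n xs assume "xs \<in> {xs\<in>SAP E x n. set xs \<subseteq> W}"
    then have "?s ^ ((n - 1) div 2) * Z E \<alpha> (W - set xs) \<le> ?Z'"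
      using Z_cycle_bound[OF fin sg] by auto
    then show "Z E \<alpha> (W - set xs) \<le> ?Z' / ?s ^ ((n - 1) div 2)"
      using spos by (simp add: field_simps)
  qed auto
  also have "\<dots> \<le> ?Z' + (\<Sum>n\<in>{2..card W}. real (a n) * (exp (-\<alpha> * real n) * (?Z' / ?s ^ ((n - 1) div 2))))"
  proof (intro add_left_mono sum_mono)
    fix n
    have "(\<Sum>xs\<in>{xs\<in>SAP E x n. set xs \<subseteq> W}. exp (-\<alpha> * real n) * (?Z' / ?s ^ ((n - 1) div 2)))
        = real (card {xs\<in>SAP E x n. set xs \<subseteq> W}) * (exp (-\<alpha> * real n) * (?Z' / ?s ^ ((n - 1) div 2)))"
      by simp
    also have "\<dots> \<le> real (a n) * (exp (-\<alpha> * real n) * (?Z' / ?s ^ ((n - 1) div 2)))"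
      by (rule mult_right_mono) (use cardb[of n] Z'nn spos in auto)
    finally show "(\<Sum>xs\<in>{xs\<in>SAP E x n. set xs \<subseteq> W}. exp (-\<alpha> * real n) * (?Z' / ?s ^ ((n - 1) div 2)))
        \<le> real (a n) * (exp (-\<alpha> * real n) * (?Z' / ?s ^ ((n - 1) div 2)))" .
  qed
  also have "\<dots> = ?Z' * (1 + (\<Sum>n\<in>{2..card W}. real (a n) * exp (-\<alpha> * real n) / ?s ^ ((n - 1) div 2)))"
    by (simp add: algebra_simps sum_distrib_left)
  finally show ?thesis .
qed



primrec Rch :: "('v \<Rightarrow> 'v \<Rightarrow> bool) \<Rightarrow> 'v \<Rightarrow> nat \<Rightarrow> 'v set" where
  "Rch E x 0 = {x}"
| "Rch E x (Suc k) = Rch E x k \<union> (\<Union>y\<in>Rch E x k. {z. E y z})"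

lemma finite_Rch: "locally_finite E \<Longrightarrow> finite (Rch E x k)"
  by (induction k) (auto simp: locally_finite_def)

lemma Rch_mono: "i \<le> j \<Longrightarrow> Rch E x i \<subseteq> Rch E x j"
proof (induction j)
  case 0 then show ?case by simp
next
  case (Suc j) then show ?case by (cases "i = Suc j") auto
qed

lemma SAP_in_Rch:
  assumes "xs \<in> SAP E x n" "i < n" shows "xs ! i \<in> Rch E x i"
  using assms(2)
proof (induction i)
  case 0 then show ?case using assms(1) by (simp add: SAP_def)
next
  case (Suc i)
  then have "xs ! i \<in> Rch E x i" by simp
  moreover have "E (xs ! i) (xs ! Suc i)" using assms(1) Suc.prems by (simp add: SAP_def)
  ultimately show ?case by auto
qed

lemma finite_SAP:
  assumes "locally_finite E" shows "finite (SAP E x n)"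
proof (rule finite_subset[OF _ finite_lists_length_le[OF finite_Rch[OF assms, of x n], of n]])
  show "SAP E x n \<subseteq> {xs. set xs \<subseteq> Rch E x n \<and> length xs \<le> n}"
  proof
    fix xs assume xs: "xs \<in> SAP E x n"
    then have l: "length xs = n" by (simp add: SAP_def)
    have "set xs \<subseteq> Rch E x n"
    proof
      fix y assume "y \<in> set xs"
      then obtain i where "i < n" "y = xs ! i" using l by (auto simp: in_set_conv_nth)
      then show "y \<in> Rch E x n" using SAP_in_Rch[OF xs] Rch_mono[of i n E x] by auto
    qed
    then show "xs \<in> {xs. set xs \<subseteq> Rch E x n \<and> length xs \<le> n}" using l by simp
  qed
qed

lemma card_SAP_le:
  assumes vt: "vertex_transitive E" and lf: "locally_finite E"
  shows "card (SAP E x n) \<le> card (SAP E v0 n)"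
proof -
  obtain \<phi> where \<phi>: "graph_automorphism E \<phi>" "\<phi> x = v0" using vt unfolding vertex_transitive_def by blast
  have inj: "inj \<phi>" and e: "\<And>a b. E a b \<longleftrightarrow> E (\<phi> a) (\<phi> b)"
    using \<phi>(1) by (auto simp: graph_automorphism_def bij_def)
  have "map \<phi> ` SAP E x n \<subseteq> SAP E v0 n"
  proof
    fix ys assume "ys \<in> map \<phi> ` SAP E x n"
    then obtain xs where xs: "xs \<in> SAP E x n" "ys = map \<phi> xs" by auto
    then have "length xs = n" "n \<ge> 1" "distinct xs" "xs ! 0 = x"
      "\<forall>i. Suc i < n \<longrightarrow> E (xs ! i) (xs ! Suc i)" "E (xs ! (n - 1)) (xs ! 0)"
      by (auto simp: SAP_def)
    then show "ys \<in> SAP E v0 n" unfolding SAP_def using xs(2) inj \<phi>(2) e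
      by (auto simp: distinct_map inj_on_subset[OF inj])
  qed
  moreover have "inj_on (map \<phi>) (SAP E x n)"
    using inj by (simp add: inj_on_def)
  ultimately show ?thesis using card_inj_on_le finite_SAP[OF lf] by blast
qed



definition qf :: "real \<Rightarrow> real" where "qf \<alpha> = 1 / sqrt (exp (2*\<alpha>) + 1)"

lemma qf_pos: "qf \<alpha> > 0" by (simp add: qf_def add_pos_pos)

lemma qf_alt: "qf \<alpha> = exp (-\<alpha>) / sqrt (1 + exp (-2*\<alpha>))"
proof -
  have "exp (2*\<alpha>) + 1 = exp \<alpha> ^ 2 * (1 + exp (-2*\<alpha>))"
    by (simp add: algebra_simps power2_eq_square exp_add[symmetric] exp_minus_inverse)
  then have "sqrt (exp (2*\<alpha>) + 1) = exp \<alpha> * sqrt (1 + exp (-2*\<alpha>))"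
    by (simp add: real_sqrt_mult)
  then show ?thesis by (simp add: qf_def exp_minus field_simps)
qed

lemma qf_strict_anti: "\<alpha> < \<beta> \<Longrightarrow> qf \<beta> < qf \<alpha>"
  unfolding qf_def by (intro divide_strict_left_mono) (auto simp: add_pos_pos)

lemma qf_anti: "\<alpha> \<le> \<beta> \<Longrightarrow> qf \<beta> \<le> qf \<alpha>"
  using qf_strict_anti[of \<alpha> \<beta>] by (cases "\<alpha> = \<beta>") auto

lemma qf_sq: "qf \<alpha> ^ 2 = 1 / (exp (2*\<alpha>) + 1)"
  unfolding qf_def by (simp add: power_divide add_pos_pos less_imp_le)

lemma term_bound:
  "exp (-\<alpha> * real n) / (1 + exp (-2*\<alpha>)) ^ ((n - 1) div 2) \<le> (1 + exp (-2*\<alpha>)) * qf \<alpha> ^ n"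
proof -
  define s where "s = 1 + exp (-2*\<alpha>)"
  define m where "m = (n - 1) div 2"
  have s1: "s \<ge> 1" by (simp add: s_def)
  have ss: "sqrt s \<ge> 1" using s1 by simp
  have "sqrt s ^ n \<le> sqrt s ^ (2 * m + 2)"
    by (rule power_increasing) (use ss in \<open>auto simp: m_def\<close>)
  also have "\<dots> = s * s ^ m" using s1 by (simp add: power_mult power_add)
  finally have key: "sqrt s ^ n \<le> s * s ^ m" .
  have q: "qf \<alpha> ^ n = exp (-\<alpha> * real n) / sqrt s ^ n"
    by (simp add: qf_alt s_def power_divide exp_of_nat_mult[symmetric] algebra_simps)
  have sp: "sqrt s ^ n > 0" "s ^ m > 0" using s1 by auto
  have "exp (-\<alpha> * real n) / s ^ m \<le> s * (exp (-\<alpha> * real n) / sqrt s ^ n)"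
    using key sp by (simp add: field_simps mult_left_mono)
  then show ?thesis unfolding q s_def m_def .
qed

lemma summable_root:
  assumes ls: "limsup (\<lambda>n. ereal (root n (real (a n)))) = ereal \<mu>"
    and mq: "\<mu> * q < 1" and q: "q > 0" and mu: "\<mu> \<ge> 0"
  shows "summable (\<lambda>n. real (a n) * q ^ n)"
proof -
  define r where "r = (\<mu> + 1/q) / 2"
  have "\<mu> < 1/q" using mq q by (simp add: field_simps)
  then have mr: "\<mu> < r" "r * q < 1" using q by (auto simp: r_def field_simps)
  have rq0: "r * q \<ge> 0" using mr mu q by auto
  have ev: "eventually (\<lambda>n. ereal (root n (real (a n))) < ereal r) sequentially"
    by (rule Limsup_lessD) (use ls mr in simp)
  have "eventually (\<lambda>n. norm (real (a n) * q ^ n) \<le> (r * q) ^ n) sequentially"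
    using ev eventually_gt_at_top[of 0]
  proof eventually_elim
    case (elim n)
    have "real (a n) = root n (real (a n)) ^ n" using elim(2) by (simp add: real_root_pow_pos2)
    also have "\<dots> \<le> r ^ n" by (rule power_mono) (use elim(1) elim(2) in auto)
    finally have "real (a n) * q ^ n \<le> r ^ n * q ^ n" using q by (simp add: mult_right_mono)
    then show ?case using q by (simp add: power_mult_distrib)
  qed
  then show ?thesis by (rule summable_comparison_test_ev) (use rq0 mr in \<open>simp add: summable_geometric\<close>)
qed

lemma Z_remove:
  assumes step: "\<And>W x. finite W \<Longrightarrow> x \<in> W \<Longrightarrow> c * Z E \<alpha> W \<le> Z E \<alpha> (W - {x})"
    and c: "c \<ge> 0" and fin: "finite U"
  shows "A \<subseteq> U \<Longrightarrow> c ^ card A * Z E \<alpha> U \<le> Z E \<alpha> (U - A)"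
proof -
  assume "A \<subseteq> U"
  then have finA: "finite A" using fin finite_subset by blast
  show ?thesis using finA \<open>A \<subseteq> U\<close>
  proof (induction A rule: finite_induct)
    case empty then show ?case by simp
  next
    case (insert a A)
    then have IH: "c ^ card A * Z E \<alpha> U \<le> Z E \<alpha> (U - A)" by simp
    have "c ^ card (insert a A) * Z E \<alpha> U = c * (c ^ card A * Z E \<alpha> U)" using insert by simp
    also have "\<dots> \<le> c * Z E \<alpha> (U - A)" by (rule mult_left_mono[OF IH c])
    also have "\<dots> \<le> Z E \<alpha> ((U - A) - {a})" by (rule step) (use fin insert in auto)
    also have "(U - A) - {a} = U - insert a A" by auto
    finally show ?case .
  qed
qed



theorem proposition3p3:
  fixes E :: "'v \<Rightarrow> 'v \<Rightarrow> bool" and v0 :: 'v and \<mu> \<alpha>\<^sub>0 :: real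
  assumes "simple_graph E"
    and "infinite (UNIV :: 'v set)"
    and "vertex_transitive E"
    and "locally_finite E"
    and "cyclic_connective_constant E v0 = ereal \<mu>"
    and "\<mu> > 0"
    and "\<alpha>\<^sub>0 + ln (1 + exp (- 2 * \<alpha>\<^sub>0)) / 2 = ln \<mu>"
  shows "\<exists>c\<^sub>1 :: real \<Rightarrow> real.
           (\<forall>\<alpha> > \<alpha>\<^sub>0. c\<^sub>1 \<alpha> > 0 \<and>
              (\<forall>U A. finite U \<longrightarrow> A \<subseteq> U \<longrightarrow>
                 Z E \<alpha> (U - A) / Z E \<alpha> U \<ge> c\<^sub>1 \<alpha> ^ card A))
         \<and> (c\<^sub>1 \<longlongrightarrow> 1) at_top"
proof -
  note sg = assms(1) and vt = assms(3) and lf = assms(4) and ls = assms(5) and mu = assms(6)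
  define a where "a n = card (SAP E v0 n)" for n
  define G where "G \<alpha> = suminf (\<lambda>n. real (a n) * qf \<alpha> ^ n)" for \<alpha>
  define c where "c \<alpha> = 1 / (1 + (1 + exp (-2*\<alpha>)) * G \<alpha>)" for \<alpha>
  have ls': "limsup (\<lambda>n. ereal (root n (real (a n)))) = ereal \<mu>"
    using ls by (simp add: cyclic_connective_constant_def a_def)
  have mu_eq: "\<mu> = sqrt (exp (2*\<alpha>\<^sub>0) + 1)"
  proof -
    have "\<mu> = exp (ln \<mu>)" using mu by simp
    also have "\<dots> = exp \<alpha>\<^sub>0 * exp (ln (1 + exp (- 2 * \<alpha>\<^sub>0)) / 2)"
      unfolding assms(7)[symmetric] by (simp add: exp_add)
    also have "exp (ln (1 + exp (- 2 * \<alpha>\<^sub>0)) / 2) = sqrt (1 + exp (- 2 * \<alpha>\<^sub>0))"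
    proof -
      have p: "1 + exp (- 2 * \<alpha>\<^sub>0) > 0" by (simp add: add_pos_pos)
      then show ?thesis using powr_half_sqrt[of "1 + exp (- 2 * \<alpha>\<^sub>0)"] by (simp add: powr_def)
    qed
    finally have "\<mu> = exp \<alpha>\<^sub>0 * sqrt (1 + exp (- 2 * \<alpha>\<^sub>0))" .
    also have "\<dots> = 1 / qf \<alpha>\<^sub>0" by (simp add: qf_alt exp_minus field_simps)
    finally show ?thesis by (simp add: qf_def)
  qed
  have summ: "summable (\<lambda>n. real (a n) * qf \<alpha> ^ n)" if "\<alpha> > \<alpha>\<^sub>0" for \<alpha>
  proof (rule summable_root[OF ls' _ qf_pos])
    have "\<mu> * qf \<alpha> = qf \<alpha> / qf \<alpha>\<^sub>0" using mu_eq by (simp add: qf_def)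
    also have "\<dots> < 1" using qf_strict_anti[OF that] qf_pos[of \<alpha>\<^sub>0] by simp
    finally show "\<mu> * qf \<alpha> < 1" .
  qed (use mu in auto)
  have Gnn: "G \<alpha> \<ge> 0" if "\<alpha> > \<alpha>\<^sub>0" for \<alpha>
    unfolding G_def by (rule suminf_nonneg[OF summ[OF that]]) (simp add: qf_pos less_imp_le)
  have cpos: "c \<alpha> > 0" if "\<alpha> > \<alpha>\<^sub>0" for \<alpha>
    unfolding c_def using Gnn[OF that] by (simp add: add_pos_nonneg)
  have step: "c \<alpha> * Z E \<alpha> W \<le> Z E \<alpha> (W - {x})" if "\<alpha> > \<alpha>\<^sub>0" "finite W" "x \<in> W" for \<alpha> W x
  proof -
    let ?s = "1 + exp (-2*\<alpha>)"
    have cardb: "card {xs\<in>SAP E x n. set xs \<subseteq> W} \<le> a n" for n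
    proof -
      have "card {xs\<in>SAP E x n. set xs \<subseteq> W} \<le> card (SAP E x n)"
        by (rule card_mono[OF finite_SAP[OF lf]]) auto
      also have "\<dots> \<le> a n" unfolding a_def by (rule card_SAP_le[OF vt lf])
      finally show ?thesis .
    qed
    have "(\<Sum>n\<in>{2..card W}. real (a n) * exp (-\<alpha> * real n) / ?s ^ ((n - 1) div 2))
        \<le> (\<Sum>n\<in>{2..card W}. ?s * (real (a n) * qf \<alpha> ^ n))"
    proof (rule sum_mono)
      fix n
      have "real (a n) * (exp (-\<alpha> * real n) / ?s ^ ((n - 1) div 2)) \<le> real (a n) * (?s * qf \<alpha> ^ n)"
        by (rule mult_left_mono[OF term_bound]) simp
      then show "real (a n) * exp (-\<alpha> * real n) / ?s ^ ((n - 1) div 2) \<le> ?s * (real (a n) * qf \<alpha> ^ n)"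
        by (simp add: algebra_simps)
    qed
    also have "\<dots> = ?s * (\<Sum>n\<in>{2..card W}. real (a n) * qf \<alpha> ^ n)" by (simp add: sum_distrib_left)
    also have "\<dots> \<le> ?s * G \<alpha>" unfolding G_def
      by (rule mult_left_mono[OF sum_le_suminf[OF summ[OF that(1)]]]) (auto simp: qf_pos less_imp_le add_nonneg_nonneg)
    finally have b: "(\<Sum>n\<in>{2..card W}. real (a n) * exp (-\<alpha> * real n) / ?s ^ ((n - 1) div 2)) \<le> ?s * G \<alpha>" .
    have "Z E \<alpha> W \<le> Z E \<alpha> (W - {x}) * (1 + (\<Sum>n\<in>{2..card W}. real (a n) * exp (-\<alpha> * real n) / ?s ^ ((n - 1) div 2)))"
      by (rule Z_step2[OF that(2) that(3) sg cardb])
    also have "\<dots> \<le> Z E \<alpha> (W - {x}) * (1 + ?s * G \<alpha>)"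
      by (rule mult_left_mono) (use b Z_nonneg in auto)
    finally have "Z E \<alpha> W \<le> Z E \<alpha> (W - {x}) * (1 + ?s * G \<alpha>)" .
    moreover have "1 + ?s * G \<alpha> > 0" using Gnn[OF that(1)] by (simp add: add_pos_nonneg)
    ultimately show ?thesis unfolding c_def by (simp add: field_simps)
  qed
  have part1: "\<forall>\<alpha> > \<alpha>\<^sub>0. c \<alpha> > 0 \<and> (\<forall>U A. finite U \<longrightarrow> A \<subseteq> U \<longrightarrow> Z E \<alpha> (U - A) / Z E \<alpha> U \<ge> c \<alpha> ^ card A)"
  proof (intro allI impI conjI)
    fix \<alpha> assume \<alpha>: "\<alpha> > \<alpha>\<^sub>0"
    show "c \<alpha> > 0" by (rule cpos[OF \<alpha>])
    fix U A :: "'v set" assume U: "finite U" and A: "A \<subseteq> U"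
    have "c \<alpha> ^ card A * Z E \<alpha> U \<le> Z E \<alpha> (U - A)"
      by (rule Z_remove[OF step[OF \<alpha>] _ U A]) (use cpos[OF \<alpha>] in auto)
    then show "Z E \<alpha> (U - A) / Z E \<alpha> U \<ge> c \<alpha> ^ card A" using Z_pos[OF U] by (simp add: field_simps)
  qed
  define \<alpha>1 where "\<alpha>1 = \<alpha>\<^sub>0 + 1"
  have a1: "\<alpha>1 > \<alpha>\<^sub>0" by (simp add: \<alpha>1_def)
  have a01: "a 0 = 0" "a 1 = 0"
    using sg by (auto simp: a_def SAP_def simple_graph_def)
  define K where "K = G \<alpha>1 / qf \<alpha>1 ^ 2"
  have Knn: "K \<ge> 0" using Gnn[OF a1] qf_pos[of \<alpha>1] by (simp add: K_def)
  have Gb: "G \<alpha> \<le> K * qf \<alpha> ^ 2" if "\<alpha> \<ge> \<alpha>1" for \<alpha>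
  proof -
    have \<alpha>: "\<alpha> > \<alpha>\<^sub>0" using that a1 by simp
    let ?r = "qf \<alpha> / qf \<alpha>1"
    have r: "0 \<le> ?r" "?r \<le> 1" using qf_anti[OF that] qf_pos[of \<alpha>] qf_pos[of \<alpha>1] by auto
    have tb: "real (a n) * qf \<alpha> ^ n \<le> ?r ^ 2 * (real (a n) * qf \<alpha>1 ^ n)" for n
    proof (cases "n \<ge> 2")
      case True
      have "?r ^ n \<le> ?r ^ 2" by (rule power_decreasing[OF True r(1) r(2)])
      then have "?r ^ n * qf \<alpha>1 ^ n \<le> ?r ^ 2 * qf \<alpha>1 ^ n"
        by (rule mult_right_mono) (simp add: qf_pos less_imp_le)
      moreover have "?r ^ n * qf \<alpha>1 ^ n = qf \<alpha> ^ n" using qf_pos[of \<alpha>1]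
        by (simp add: power_divide)
      ultimately have "qf \<alpha> ^ n \<le> ?r ^ 2 * qf \<alpha>1 ^ n" by simp
      then show ?thesis by (simp add: mult_left_mono algebra_simps)
    next
      case False
      then have "n = 0 \<or> n = 1" by auto
      then show ?thesis using a01 by auto
    qed
    have "G \<alpha> \<le> suminf (\<lambda>n. ?r ^ 2 * (real (a n) * qf \<alpha>1 ^ n))" unfolding G_def
      by (rule suminf_le[OF tb summ[OF \<alpha>] summable_mult[OF summ[OF a1]]])
    also have "\<dots> = ?r ^ 2 * G \<alpha>1" unfolding G_def by (rule suminf_mult[OF summ[OF a1]])
    also have "\<dots> = K * qf \<alpha> ^ 2" using qf_pos[of \<alpha>1] by (simp add: K_def power_divide)
    finally show ?thesis .
  qed
  have lim_q: "((\<lambda>\<alpha>. qf \<alpha> ^ 2) \<longlongrightarrow> 0) at_top"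
    unfolding qf_sq by real_asymp
  have lim_e: "((\<lambda>\<alpha>::real. 1 + exp (-2*\<alpha>)) \<longlongrightarrow> 1) at_top" by real_asymp
  have lim_low: "((\<lambda>\<alpha>. 1 / (1 + (1 + exp (-2*\<alpha>)) * (K * qf \<alpha> ^ 2))) \<longlongrightarrow> 1) at_top"
  proof -
    have l1: "((\<lambda>\<alpha>. 1 + (1 + exp (-2*\<alpha>)) * (K * qf \<alpha> ^ 2)) \<longlongrightarrow> 1 + 1 * (K * 0)) at_top"
      by (intro tendsto_add tendsto_mult tendsto_const lim_e lim_q)
    have "((\<lambda>\<alpha>. 1 / (1 + (1 + exp (-2*\<alpha>)) * (K * qf \<alpha> ^ 2))) \<longlongrightarrow> 1 / (1 + 1 * (K * 0))) at_top"
      by (rule tendsto_divide[OF tendsto_const l1]) simp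
    then show ?thesis by simp
  qed
  have lim: "(c \<longlongrightarrow> 1) at_top"
  proof (rule tendsto_sandwich[OF _ _ lim_low tendsto_const])
    show "eventually (\<lambda>\<alpha>. 1 / (1 + (1 + exp (-2*\<alpha>)) * (K * qf \<alpha> ^ 2)) \<le> c \<alpha>) at_top"
      using eventually_ge_at_top[of \<alpha>1]
    proof eventually_elim
      case (elim \<alpha>)
      have \<alpha>: "\<alpha> > \<alpha>\<^sub>0" using elim a1 by simp
      have s: "1 + exp (-2*\<alpha>) > 0" by (simp add: add_pos_pos)
      have "(1 + exp (-2*\<alpha>)) * G \<alpha> \<le> (1 + exp (-2*\<alpha>)) * (K * qf \<alpha> ^ 2)"
        by (rule mult_left_mono[OF Gb[OF elim]]) (use s in simp)
      moreover have "0 < 1 + (1 + exp (-2*\<alpha>)) * G \<alpha>"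
        using Gnn[OF \<alpha>] s by (simp add: add_pos_nonneg)
      moreover have "0 < 1 + (1 + exp (-2*\<alpha>)) * (K * qf \<alpha> ^ 2)"
        using Knn s by (simp add: add_pos_nonneg)
      ultimately show ?case unfolding c_def
        by (intro divide_left_mono) (auto intro!: mult_pos_pos)
    qed
    show "eventually (\<lambda>\<alpha>. c \<alpha> \<le> 1) at_top"
      using eventually_gt_at_top[of \<alpha>\<^sub>0]
    proof eventually_elim
      case (elim \<alpha>)
      have s: "1 + exp (-2*\<alpha>) > 0" by (simp add: add_pos_pos)
      have "0 \<le> (1 + exp (-2*\<alpha>)) * G \<alpha>" using Gnn[OF elim] s by simp
      then show ?case unfolding c_def by simp
    qed
  qed
  show ?thesis using part1 lim by blast
qed


end
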